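(* If $\lambda$ is a strict partition ($\lambda_1>\lambda_2>\cdots>\lambda_n\ge0$), then the number of gapless $\lambda$-keys is the Catalan number $C_n=\frac{1}{n+1}\binom{2n}{n}$.
   Context: Fix $n\ge1$, $[m]=\{1,\dots,m\}$. A partition is $\lambda=(\lambda_1\ge\cdots\ge\lambda_n\ge0)\in\mathbb{Z}^n$; its boxes are $(j,i)$ (column $j$, row $i$) with $1\le j\le\lambda_1$, $1\le i\le\zeta_j:=\#\{i:\lambda_i\ge j\}$. A tableau of shape $\lambda$ fills the boxes with values in $[n]$, strictly increasing down columns and weakly increasing along rows. A $\lambda$-key is a tableau $Y$ of shape $\lambda$ such that the set of entries of column $l$ contains the set of entries of column $j$ whenever $l\le j$. Let $q_1<\dots<q_r$ be the distinct column lengths of $\lambda$ less than $n$. A $\lambda$-key $Y$ is gapless if for every $h\in[r-1]$: letting $b$ be the smallest value in the columns of length $q_{h+1}$ that does not appear in the columns of length $q_h$, and $m$ the largest value in the columns of length $q_h$, if $b\le m$ then every column of length $q_{h+1}$ contains all of $b,b+1,\dots,m$. *)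

theory Defs
  imports Complex_Main
begin

text \<open>A partition of length n is represented by lam :: nat => nat, using only
  the values lam 1, ..., lam n. A tableau is a function T :: nat => nat => nat,
  T j i being the entry in column j, row i; entries outside the diagram are 0.\<close>

definition is_partition :: "nat \<Rightarrow> (nat \<Rightarrow> nat) \<Rightarrow> bool" where
  "is_partition n lam \<longleftrightarrow> (\<forall>i. 1 \<le> i \<and> i < n \<longrightarrow> lam (Suc i) \<le> lam i)"

definition strict_partition :: "nat \<Rightarrow> (nat \<Rightarrow> nat) \<Rightarrow> bool" where
  "strict_partition n lam \<longleftrightarrow> (\<forall>i. 1 \<le> i \<and> i < n \<longrightarrow> lam (Suc i) < lam i)"

definition col_len :: "nat \<Rightarrow> (nat \<Rightarrow> nat) \<Rightarrow> nat \<Rightarrow> nat" where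
  "col_len n lam j = card {i. 1 \<le> i \<and> i \<le> n \<and> j \<le> lam i}"

definition boxes :: "nat \<Rightarrow> (nat \<Rightarrow> nat) \<Rightarrow> (nat \<times> nat) set" where
  "boxes n lam = {(j, i). 1 \<le> j \<and> j \<le> lam 1 \<and> 1 \<le> i \<and> i \<le> col_len n lam j}"

definition tableau :: "nat \<Rightarrow> (nat \<Rightarrow> nat) \<Rightarrow> (nat \<Rightarrow> nat \<Rightarrow> nat) \<Rightarrow> bool" where
  "tableau n lam T \<longleftrightarrow>
     (\<forall>j i. (j, i) \<in> boxes n lam \<longrightarrow> 1 \<le> T j i \<and> T j i \<le> n) \<and>
     (\<forall>j i. (j, i) \<notin> boxes n lam \<longrightarrow> T j i = 0) \<and>
     (\<forall>j i. (j, i) \<in> boxes n lam \<and> (j, Suc i) \<in> boxes n lam \<longrightarrow> T j i < T j (Suc i)) \<and>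
     (\<forall>j i. (j, i) \<in> boxes n lam \<and> (Suc j, i) \<in> boxes n lam \<longrightarrow> T j i \<le> T (Suc j) i)"

definition col_set :: "nat \<Rightarrow> (nat \<Rightarrow> nat) \<Rightarrow> (nat \<Rightarrow> nat \<Rightarrow> nat) \<Rightarrow> nat \<Rightarrow> nat set" where
  "col_set n lam T j = {T j i | i. 1 \<le> i \<and> i \<le> col_len n lam j}"

definition is_key :: "nat \<Rightarrow> (nat \<Rightarrow> nat) \<Rightarrow> (nat \<Rightarrow> nat \<Rightarrow> nat) \<Rightarrow> bool" where
  "is_key n lam Y \<longleftrightarrow> tableau n lam Y \<and>
     (\<forall>l j. 1 \<le> l \<and> l \<le> j \<and> j \<le> lam 1 \<longrightarrow> col_set n lam Y j \<subseteq> col_set n lam Y l)"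

definition cols_of_len :: "nat \<Rightarrow> (nat \<Rightarrow> nat) \<Rightarrow> nat \<Rightarrow> nat set" where
  "cols_of_len n lam q = {j. 1 \<le> j \<and> j \<le> lam 1 \<and> col_len n lam j = q}"

definition short_lengths :: "nat \<Rightarrow> (nat \<Rightarrow> nat) \<Rightarrow> nat set" where
  "short_lengths n lam = {col_len n lam j | j. 1 \<le> j \<and> j \<le> lam 1 \<and> col_len n lam j < n}"

definition vals_of_len :: "nat \<Rightarrow> (nat \<Rightarrow> nat) \<Rightarrow> (nat \<Rightarrow> nat \<Rightarrow> nat) \<Rightarrow> nat \<Rightarrow> nat set" where
  "vals_of_len n lam Y q = (\<Union>j\<in>cols_of_len n lam q. col_set n lam Y j)"

definition gapless :: "nat \<Rightarrow> (nat \<Rightarrow> nat) \<Rightarrow> (nat \<Rightarrow> nat \<Rightarrow> nat) \<Rightarrow> bool" where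
  "gapless n lam Y \<longleftrightarrow>
     (\<forall>q \<in> short_lengths n lam. \<forall>q' \<in> short_lengths n lam.
        q < q' \<and> \<not> (\<exists>x \<in> short_lengths n lam. q < x \<and> x < q') \<longrightarrow>
        (let b = Min (vals_of_len n lam Y q' - vals_of_len n lam Y q);
             m = Max (vals_of_len n lam Y q)
         in b \<le> m \<longrightarrow> (\<forall>j \<in> cols_of_len n lam q'. {b..m} \<subseteq> col_set n lam Y j)))"

end

theory Submission
  imports Defs
begin



fun F :: "nat \<Rightarrow> nat \<Rightarrow> nat" where
  "F 0 g = 1"
| "F (Suc a) 0 = F a 1"
| "F (Suc a) (Suc g) = F (Suc a) g + F a (Suc (Suc g))"

lemma F_sum: "(\<Sum>t=1..Suc a. F (Suc a - t) (g + t - 1)) = F a (Suc g)"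
proof (induction a arbitrary: g)
  case 0 show ?case by simp
next
  case (Suc a)
  have "(\<Sum>t=1..Suc (Suc a). F (Suc (Suc a) - t) (g + t - 1)) = F (Suc a) g + (\<Sum>t=Suc 1..Suc (Suc a). F (Suc (Suc a) - t) (g + t - 1))"
    by (subst sum.atLeast_Suc_atMost) auto
  also have "(\<Sum>t=Suc 1..Suc (Suc a). F (Suc (Suc a) - t) (g + t - 1)) = (\<Sum>t=1..Suc a. F (Suc a - t) (Suc g + t - 1))"
    by (rule sum.reindex_bij_witness[of _ "\<lambda>t. t+1" "\<lambda>t. t-1"]) auto
  also have "\<dots> = F a (Suc (Suc g))" by (rule Suc.IH)
  finally show ?case by simp
qed

lemma F_sumform: assumes "a > 0 \<or> g > 0" shows
  "F a g = (if g > 0 then F a (g-1) else 0) + (\<Sum>t=1..a. F (a-t) (g+t-1))"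
proof (cases a)
  case 0 then show ?thesis using assms by auto
next
  case (Suc b)
  have s: "(\<Sum>t=1..a. F (a-t) (g+t-1)) = F b (Suc g)" using F_sum[of b g] Suc by simp
  show ?thesis unfolding s by (cases g) (simp_all add: Suc)
qed

lemma F_closed: "a > 0 \<Longrightarrow> int (F a g) = int ((2*a+g) choose a) - int ((2*a+g) choose (a-1))"
proof (induction a g rule: F.induct)
  case (1 g) then show ?case by simp
next
  case (2 a)
  show ?case
  proof (cases a)
    case 0 then show ?thesis by simp
  next
    case (Suc b)
    have IH: "int (F a 1) = int ((2*a+1) choose a) - int ((2*a+1) choose (a-1))" using 2 Suc by simp
    have sym: "(2*a+1) choose (Suc a) = (2*a+1) choose a"
      using binomial_symmetric[of "Suc a" "2*a+1"] by simp
    have p1: "(2*Suc a) choose (Suc a) = ((2*a+1) choose a) + ((2*a+1) choose Suc a)"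
      by (simp add: Suc)
    have p2: "(2*Suc a) choose a = ((2*a+1) choose b) + ((2*a+1) choose a)"
      by (simp add: Suc)
    show ?thesis using IH p1 p2 sym Suc by simp
  qed
next
  case (3 a g)
  have IH1: "int (F (Suc a) g) = int ((2*a+g+2) choose Suc a) - int ((2*a+g+2) choose a)"
    using 3(1) by simp
  have IH2: "int (F a (Suc (Suc g))) = (if a = 0 then 1 else int ((2*a+g+2) choose a) - int ((2*a+g+2) choose (a-1)))"
    using 3(2) by (cases a) auto
  have p1: "(2*a+g+3) choose Suc a = ((2*a+g+2) choose a) + ((2*a+g+2) choose Suc a)"
    by (simp add: numeral_eq_Suc)
  show ?case
  proof (cases a)
    case 0 then show ?thesis using IH1 IH2 by (simp add: numeral_eq_Suc)
  next
    case (Suc b)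
    have p2: "(2*a+g+3) choose a = ((2*a+g+2) choose b) + ((2*a+g+2) choose a)"
      by (simp add: Suc numeral_eq_Suc)
    show ?thesis using IH1 IH2 p1 p2 Suc by (simp add: numeral_eq_Suc)
  qed
qed

lemma F_catalan: "n \<ge> 1 \<Longrightarrow> real (F n 0) = real ((2*n) choose n) / real (n+1)"
proof -
  assume "n \<ge> 1"
  then obtain k where k: "n = Suc k" by (cases n) auto
  have c: "int (F n 0) = int ((2*n) choose n) - int ((2*n) choose k)" using F_closed[of n 0] k by simp
  have nn: "2*n = Suc (k + Suc k)" using k by simp
  have e: "Suc k * ((2*n) choose n) = Suc (Suc k) * ((2*n) choose k)"
    unfolding nn using Suc_times_binomial_add[of k "Suc k"] k by simp
  have x: "real (F n 0) = real ((2*n) choose n) - real ((2*n) choose k)"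
    using c by (metis of_int_diff of_int_of_nat_eq)
  have e': "real (Suc k) * real ((2*n) choose n) = real (Suc (Suc k)) * real ((2*n) choose k)"
    using arg_cong[OF e, of real] by (simp only: of_nat_mult)
  have gen: "\<And>x A B::real. x = A - B \<Longrightarrow> (real k + 1) * A = (real k + 2) * B \<Longrightarrow> x = A / (real k + 2)"
  proof -
    fix x A B :: real assume h1: "x = A - B" and h2: "(real k + 1) * A = (real k + 2) * B"
    have "x * (real k + 2) = A * (real k + 2) - (real k + 2) * B" by (simp add: h1 algebra_simps)
    also have "\<dots> = A" unfolding h2[symmetric] by (simp add: algebra_simps)
    finally have "x * (real k + 2) = A" .
    then show "x = A / (real k + 2)" by (simp add: field_simps)
  qed
  have "real (F n 0) = real ((2*n) choose n) / (real k + 2)"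
    by (rule gen[OF x]) (use e' in \<open>simp add: add.commute\<close>)
  then show ?thesis using k by simp
qed




definition cnd :: "nat set \<Rightarrow> nat \<Rightarrow> bool" where
  "cnd P x \<longleftrightarrow> (P \<noteq> {} \<longrightarrow> x \<le> Max P \<longrightarrow> {x..Max P} \<subseteq> insert x P)"

fun validP :: "nat set \<Rightarrow> nat list \<Rightarrow> bool" where
  "validP P [] = True"
| "validP P (x#xs) = (cnd P x \<and> validP (insert x P) xs)"

definition LL :: "nat \<Rightarrow> nat set \<Rightarrow> nat list set" where
  "LL n P = {xs. distinct xs \<and> set xs = {1..n} - P \<and> validP P xs}"

lemma LL_finite: "finite (LL n P)"
proof -
  have "LL n P \<subseteq> {xs. set xs \<subseteq> {1..n} \<and> length xs \<le> n}"
    unfolding LL_def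
  proof safe
    fix xs assume "distinct xs" "set xs = {1..n} - P"
    then have "length xs = card (set xs)" using distinct_card[of xs] by simp
    also have "\<dots> \<le> card {1..n}" unfolding \<open>set xs = {1..n} - P\<close> by (rule card_mono) auto
    finally show "length xs \<le> n" by simp
  qed auto
  then show ?thesis using finite_lists_length_le[of "{1..n}" n] finite_subset by blast
qed

lemma LL_full: "LL n {1..n} = {[]}"
  unfolding LL_def by auto

lemma LL_rec: assumes "P \<subseteq> {1..n}" "P \<noteq> {1..n}"
  shows "LL n P = (\<Union>x\<in>{x\<in>{1..n}-P. cnd P x}. (#) x ` LL n (insert x P))"
proof safe
  fix xs assume "xs \<in> LL n P"
  then have xs: "distinct xs" "set xs = {1..n} - P" "validP P xs" unfolding LL_def by auto
  have "xs \<noteq> []"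
  proof
    assume "xs = []" then have "{1..n} - P = {}" using xs by simp
    then show False using assms by blast
  qed
  then obtain y ys where yy: "xs = y # ys" by (cases xs) auto
  have s1: "insert y (set ys) = {1..n} - P" "y \<notin> set ys" "distinct ys" "cnd P y" "validP (insert y P) ys"
    using xs yy by simp_all
  have "set ys = {1..n} - insert y P" using s1(1,2) by blast
  then have "ys \<in> LL n (insert y P)" using s1 unfolding LL_def by blast
  moreover have "y \<in> {x\<in>{1..n}-P. cnd P x}" using s1 by blast
  ultimately show "xs \<in> (\<Union>x\<in>{x\<in>{1..n}-P. cnd P x}. (#) x ` LL n (insert x P))"
    using yy by blast
next
  fix x ys assume a: "x \<in> {1..n}" "x \<notin> P" "cnd P x" "ys \<in> LL n (insert x P)"
  then have b: "distinct ys" "set ys = {1..n} - insert x P" "validP (insert x P) ys" unfolding LL_def by simp_all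
  have "set (x # ys) = {1..n} - P" using a(1,2) b(2) by (simp only: set_simps) blast
  moreover have "distinct (x # ys)" using b by simp
  ultimately show "x # ys \<in> LL n P" using a(3) b(3) unfolding LL_def by simp
qed

lemma LL_card_rec: assumes "P \<subseteq> {1..n}" "P \<noteq> {1..n}"
  shows "card (LL n P) = (\<Sum>x\<in>{x\<in>{1..n}-P. cnd P x}. card (LL n (insert x P)))"
proof -
  have "card (LL n P) = (\<Sum>x\<in>{x\<in>{1..n}-P. cnd P x}. card ((#) x ` LL n (insert x P)))"
    unfolding LL_rec[OF assms]
    by (rule card_UN_disjoint) (auto simp: LL_finite)
  also have "\<dots> = (\<Sum>x\<in>{x\<in>{1..n}-P. cnd P x}. card (LL n (insert x P)))"
    by (rule sum.cong) (auto simp: card_image)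
  finally show ?thesis .
qed



lemma allowed_set:
  assumes P: "P \<subseteq> {1..n}" "P \<noteq> {}" and m_def: "m = Max P"
  shows "{x\<in>{1..n}-P. cnd P x} = {m<..n} \<union> (if m > card P then {Max ({1..m} - P)} else {})"
proof -
  have fin: "finite P" using P finite_subset by blast
  have mP: "m \<in> P" using fin P m_def by auto
  have Pm: "P \<subseteq> {1..m}" using P fin m_def by auto
  have cg: "card ({1..m} - P) = m - card P" using Pm fin by (simp add: card_Diff_subset)
  have mn: "m \<le> n" using mP P by auto
  show ?thesis
  proof (cases "m > card P")
    case True
    define x0 where "x0 = Max ({1..m} - P)"
    have ne: "{1..m} - P \<noteq> {}"
    proof
      assume "{1..m} - P = {}" then have "card ({1..m} - P) = 0" by simp
      with cg True show False by simp
    qed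
    have x0: "x0 \<in> {1..m} - P" unfolding x0_def by (rule Max_in) (use ne in auto)
    have x0max: "\<And>y. y \<in> {1..m} - P \<Longrightarrow> y \<le> x0" using x0_def by auto
    have C: "x \<in> {m<..n} \<or> x = x0" if x: "x \<in> {1..n}" "x \<notin> P" "cnd P x" for x
    proof (cases "x \<in> {m<..n}")
      case False
      then have xm: "x \<le> m" using x by auto
      then have sub: "{x..m} \<subseteq> insert x P" using x P unfolding cnd_def m_def by auto
      have "x \<le> x0" using x xm by (intro x0max) auto
      moreover have "x0 \<le> x"
      proof (rule ccontr)
        assume "\<not> x0 \<le> x" then have "x0 \<in> {x..m}" "x0 \<noteq> x" using x0 by auto
        then show False using sub x0 by auto
      qed
      ultimately show ?thesis by simp
    qed simp
    have B: "cnd P x0" unfolding cnd_def m_def[symmetric]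
    proof (intro impI subsetI)
      fix y assume y: "y \<in> {x0..m}"
      show "y \<in> insert x0 P"
      proof (rule ccontr)
        assume yn: "y \<notin> insert x0 P"
        then have "y \<in> {1..m} - P" using x0 y by auto
        then have "y \<le> x0" by (rule x0max)
        then show False using y yn by auto
      qed
    qed
    have A: "cnd P x" if "x \<in> {m<..n}" for x
      using that mP fin m_def by (auto simp: cnd_def)
    have "{x\<in>{1..n}-P. cnd P x} = {m<..n} \<union> {x0}"
    proof (intro equalityI subsetI)
      fix x assume "x \<in> {x\<in>{1..n}-P. cnd P x}"
      then show "x \<in> {m<..n} \<union> {x0}" using C by blast
    next
      fix x assume x: "x \<in> {m<..n} \<union> {x0}"
      show "x \<in> {x\<in>{1..n}-P. cnd P x}"
      proof (cases "x = x0")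
        case True then show ?thesis using B x0 mn by auto
      next
        case False
        then have xr: "x \<in> {m<..n}" using x by blast
        then have "x \<notin> P" using Pm by auto
        then show ?thesis using xr A by auto
      qed
    qed
    then show ?thesis using True x0_def by simp
  next
    case False
    have gaps: "{1..m} - P = {}" using cg False by (simp add: card_eq_0_iff)
    have "{x\<in>{1..n}-P. cnd P x} = {m<..n}"
    proof (intro equalityI subsetI)
      fix x assume x: "x \<in> {x\<in>{1..n}-P. cnd P x}"
      show "x \<in> {m<..n}"
      proof (rule ccontr)
        assume "x \<notin> {m<..n}" then have "x \<in> {1..m} - P" using x by auto
        then show False using gaps by blast
      qed
    next
      fix x assume xr: "x \<in> {m<..n}"
      then have "x \<notin> P" using Pm by auto
      moreover have "cnd P x" using xr m_def by (auto simp: cnd_def)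
      ultimately show "x \<in> {x\<in>{1..n}-P. cnd P x}" using xr by auto
    qed
    then show ?thesis using False by simp
  qed
qed



lemma LL_count:
  "P \<subseteq> {1..n} \<Longrightarrow> P \<noteq> {} \<Longrightarrow> card (LL n P) = F (n - Max P) (Max P - card P)"
proof (induction "n - card P" arbitrary: P rule: less_induct)
  case less
  have fin: "finite P" using less.prems finite_subset by blast
  define m where "m = Max P"
  have mP: "m \<in> P" using fin less.prems m_def by auto
  have Pm: "P \<subseteq> {1..m}" using less.prems fin m_def by auto
  have mn: "m \<le> n" using mP less.prems by auto
  have cPm: "card P \<le> m" using card_mono[OF _ Pm] by simp
  show ?case
  proof (cases "P = {1..n}")
    case True
    then have "m = n" using m_def less.prems(2) by (auto intro!: Max_eqI)
    then show ?thesis using True LL_full by (simp add: m_def)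
  next
    case False
    have "P \<subset> {1..n}" using False less.prems(1) by auto
    then have "card P < card {1..n}" by (rule psubset_card_mono[rotated]) simp
    then have cPn: "card P < n" by simp
    have IH: "\<And>x. x \<in> {1..n} - P \<Longrightarrow> card (LL n (insert x P)) = F (n - Max (insert x P)) (Max (insert x P) - card (insert x P))"
    proof -
      fix x assume x: "x \<in> {1..n} - P"
      have "n - card (insert x P) < n - card P" using x fin cPn by simp
      moreover have "insert x P \<subseteq> {1..n}" using x less.prems(1) by simp
      ultimately show "card (LL n (insert x P)) = F (n - Max (insert x P)) (Max (insert x P) - card (insert x P))"
        using less.hyps by blast
    qed
    have r: "card (LL n P) = (\<Sum>x\<in>{m<..n} \<union> (if m > card P then {Max ({1..m} - P)} else {}). card (LL n (insert x P)))"
      using LL_card_rec[OF less.prems(1) False] allowed_set[OF less.prems m_def] by simp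
    have up: "(\<Sum>x\<in>{m<..n}. card (LL n (insert x P))) = (\<Sum>t=1..n-m. F (n-m-t) (m - card P + t - 1))"
    proof -
      have "(\<Sum>x\<in>{m<..n}. card (LL n (insert x P))) = (\<Sum>x\<in>{m<..n}. F (n - x) (x - Suc (card P)))"
      proof (rule sum.cong)
        fix x assume x: "x \<in> {m<..n}"
        then have "x \<notin> P" using Pm by auto
        moreover have "Max (insert x P) = x" using x fin less.prems(2) m_def by (simp add: Max_insert)
        ultimately show "card (LL n (insert x P)) = F (n - x) (x - Suc (card P))"
          using IH[of x] x mP less.prems fin by auto
      qed simp
      also have "\<dots> = (\<Sum>t=1..n-m. F (n-m-t) (m - card P + t - 1))"
        by (rule sum.reindex_bij_witness[of _ "\<lambda>t. t + m" "\<lambda>x. x - m"]) (use cPm mn in auto)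
      finally show ?thesis .
    qed
    show ?thesis
    proof (cases "m > card P")
      case True
      define x0 where "x0 = Max ({1..m} - P)"
      have ne: "{1..m} - P \<noteq> {}" using True Pm fin by (auto simp: card_Diff_subset)
      have x0: "x0 \<in> {1..m} - P" unfolding x0_def by (rule Max_in) (use ne in auto)
      have Mx: "Max (insert x0 P) = m" using x0 fin less.prems(2) m_def by (simp add: Max_insert)
      have c0: "card (LL n (insert x0 P)) = F (n-m) (m - card P - 1)"
        using IH[of x0] x0 mn Mx fin by auto
      have "card (LL n P) = card (LL n (insert x0 P)) + (\<Sum>x\<in>{m<..n}. card (LL n (insert x P)))"
        using r True x0 unfolding x0_def[symmetric] by (simp add: add.commute)
      also have "\<dots> = F (n-m) (m - card P)"
        using c0 up F_sumform[of "n-m" "m - card P"] True by simp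
      finally show ?thesis using m_def by simp
    next
      case False
      then have mc: "m = card P" using cPm by simp
      then have "n - m > 0" using cPn by simp
      have "card (LL n P) = (\<Sum>t=1..n-m. F (n-m-t) (m - card P + t - 1))"
        using r up False by simp
      also have "\<dots> = F (n-m) (m - card P)"
        using F_sumform[of "n-m" "m - card P"] mc \<open>n - m > 0\<close> by simp
      finally show ?thesis using m_def by simp
    qed
  qed
qed

lemma LL_empty: assumes "n \<ge> 1" shows "card (LL n {}) = F n 0"
proof -
  have e: "{x\<in>{1..n}-{}. cnd {} x} = {1..n}" by (auto simp: cnd_def)
  have "card (LL n {}) = (\<Sum>x\<in>{1..n}. card (LL n {x}))"
    using LL_card_rec[of "{}" n] assms unfolding e by simp
  also have "\<dots> = (\<Sum>x\<in>{1..n}. F (n - x) (x - 1))"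
    by (rule sum.cong) (auto simp: LL_count)
  also have "\<dots> = (\<Sum>t=1..n. F (n-t) (0 + t - 1))" by simp
  also have "\<dots> = F n 0" using F_sumform[of n 0] assms by simp
  finally show ?thesis .
qed




lemma nth_sorted_subset:
  fixes A B :: "nat set"
  assumes fB: "finite B" and AB: "A \<subseteq> B" and k: "k < card A"
  shows "sorted_list_of_set B ! k \<le> sorted_list_of_set A ! k"
proof -
  define LA where "LA = sorted_list_of_set A"
  define LB where "LB = sorted_list_of_set B"
  have finA: "finite A" using fB AB finite_subset by blast
  have lA: "length LA = card A" using LA_def by simp
  have sA: "sorted LA" "distinct LA" "set LA = A" using finA LA_def by simp_all
  have sB: "sorted LB" "distinct LB" "set LB = B" using fB LB_def by simp_all
  have "LB ! k \<le> LA ! k"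
  proof (rule ccontr)
    assume c: "\<not> LB ! k \<le> LA ! k"
    have sub: "set (take (Suc k) LA) \<subseteq> set (take k LB)"
    proof
      fix y assume y: "y \<in> set (take (Suc k) LA)"
      then obtain p where p: "p < length (take (Suc k) LA)" "take (Suc k) LA ! p = y"
        by (auto simp: in_set_conv_nth)
      then have p2: "p \<le> k" "p < length LA" "y = LA ! p" by auto
      have yle: "y \<le> LA ! k" using sorted_nth_mono[OF sA(1) p2(1)] k lA p2(3) by simp
      have "y \<in> B" using p2 sA(3) AB nth_mem by blast
      then obtain r where r: "r < length LB" "LB ! r = y" using sB(3) by (auto simp: in_set_conv_nth)
      have "r < k"
      proof (rule ccontr)
        assume "\<not> r < k"
        then have "LB ! k \<le> LB ! r" using sorted_nth_mono[OF sB(1)] r(1) by simp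
        then show False using c yle r(2) by simp
      qed
      then show "y \<in> set (take k LB)" using r by (auto simp: in_set_conv_nth)
    qed
    have "card (set (take (Suc k) LA)) = Suc k"
      using sA(2) k lA by (simp add: distinct_card)
    moreover have "card (set (take k LB)) \<le> k"
      using card_length[of "take k LB"] by simp
    ultimately show False using card_mono[OF _ sub] by simp
  qed
  then show ?thesis by (simp add: LA_def LB_def)
qed

lemma take_sets_eq:
  assumes "distinct xs" "distinct ys" "length xs = length ys"
    and "\<And>q. set (take q xs) = set (take q ys)"
  shows "xs = ys"
proof (rule nth_equalityI)
  show "length xs = length ys" by fact
  fix k assume k: "k < length xs"
  have nx: "xs ! k \<notin> set (take k xs)" "set (take (Suc k) xs) = insert (xs ! k) (set (take k xs))"
    using distinct_take[OF assms(1), of "Suc k"] k by (auto simp: take_Suc_conv_app_nth)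
  have ny: "ys ! k \<notin> set (take k ys)" "set (take (Suc k) ys) = insert (ys ! k) (set (take k ys))"
    using distinct_take[OF assms(2), of "Suc k"] k assms(3) by (auto simp: take_Suc_conv_app_nth)
  have "xs ! k \<in> set (take (Suc k) ys) - set (take k ys)" using nx assms(4) by blast
  then show "xs ! k = ys ! k" using ny by blast
qed

lemma chain_list:
  assumes "\<And>q. q < N \<Longrightarrow> T q \<subseteq> T (Suc q)" "\<And>q. q \<le> N \<Longrightarrow> finite (T q) \<and> card (T q) = q"
  shows "\<exists>xs. length xs = N \<and> distinct xs \<and> (\<forall>q\<le>N. set (take q xs) = T q)"
  using assms
proof (induction N)
  case 0
  then have "T 0 = {}" by auto
  then show ?case by auto
next
  case (Suc N)
  obtain xs where xs: "length xs = N" "distinct xs" "\<forall>q\<le>N. set (take q xs) = T q"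
    using Suc by auto
  have fin: "finite (T (Suc N))" "card (T (Suc N)) = Suc N" "card (T N) = N" "finite (T N)"
    using Suc.prems(2) by auto
  have sub: "T N \<subseteq> T (Suc N)" using Suc.prems(1) by auto
  have "card (T (Suc N) - T N) = 1" using fin sub by (simp add: card_Diff_subset)
  then obtain x where x: "T (Suc N) - T N = {x}" using card_1_singletonE by blast
  have sN: "set xs = T N" using xs(3) xs(1) by (metis order_refl take_all)
  show ?case
  proof (intro exI conjI allI impI)
    show "length (xs @ [x]) = Suc N" using xs by simp
    show "distinct (xs @ [x])" using xs x sN by auto
    fix q assume q: "q \<le> Suc N"
    show "set (take q (xs @ [x])) = T q"
    proof (cases "q = Suc N")
      case True
      then show ?thesis using xs(1) sN x sub by auto
    next
      case False
      then show ?thesis using q xs by auto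
    qed
  qed
qed

context
  fixes n :: nat and lam :: "nat \<Rightarrow> nat"
  assumes n1: "1 \<le> n" and sp: "strict_partition n lam"
begin

lemma lam_ge: assumes "1 \<le> i" "i \<le> i'" "i' \<le> n" shows "lam i' + (i' - i) \<le> lam i"
  using assms(2,3)
proof (induction i' rule: dec_induct)
  case base then show ?case by simp
next
  case (step m)
  have "lam (Suc m) < lam m" using sp step assms(1) unfolding strict_partition_def by auto
  then show ?case using step by simp
qed

lemma c_le_n: "col_len n lam j \<le> n"
proof -
  have "col_len n lam j \<le> card {1..n}" unfolding col_len_def by (rule card_mono) auto
  then show ?thesis by simp
qed

lemma c_pos: "1 \<le> j \<Longrightarrow> j \<le> lam 1 \<Longrightarrow> 1 \<le> col_len n lam j"
  unfolding col_len_def using n1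
  by (metis (mono_tags, lifting) One_nat_def card_0_eq empty_iff finite_nat_set_iff_bounded_le le_refl
      less_one mem_Collect_eq not_le)

lemma c_anti: "j \<le> j' \<Longrightarrow> col_len n lam j' \<le> col_len n lam j"
  unfolding col_len_def by (rule card_mono) auto

lemma c_q: assumes "1 \<le> q" "q < n" shows "col_len n lam (lam (Suc q) + 1) = q"
proof -
  have "{i. 1 \<le> i \<and> i \<le> n \<and> lam (Suc q) + 1 \<le> lam i} = {1..q}"
  proof (intro equalityI subsetI)
    fix i assume i: "i \<in> {i. 1 \<le> i \<and> i \<le> n \<and> lam (Suc q) + 1 \<le> lam i}"
    show "i \<in> {1..q}"
    proof (rule ccontr)
      assume "i \<notin> {1..q}" then have "Suc q \<le> i" using i by auto
      then have "lam i + (i - Suc q) \<le> lam (Suc q)" using lam_ge[of "Suc q" i] i by auto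
      then show False using i by auto
    qed
  next
    fix i assume i: "i \<in> {1..q}"
    then have "lam (Suc q) + (Suc q - i) \<le> lam i" using lam_ge[of i "Suc q"] assms by auto
    then show "i \<in> {i. 1 \<le> i \<and> i \<le> n \<and> lam (Suc q) + 1 \<le> lam i}" using i assms by auto
  qed
  then show ?thesis unfolding col_len_def by simp
qed

lemma c_0: "col_len n lam (lam 1 + 1) = 0"
proof -
  have "{i. 1 \<le> i \<and> i \<le> n \<and> lam 1 + 1 \<le> lam i} = {}"
  proof (intro equalityI subsetI)
    fix i assume i: "i \<in> {i. 1 \<le> i \<and> i \<le> n \<and> lam 1 + 1 \<le> lam i}"
    then have "lam i + (i - 1) \<le> lam 1" using lam_ge[of 1 i] by auto
    then show "i \<in> {}" using i by auto
  qed auto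
  then show ?thesis unfolding col_len_def by simp
qed

lemma jq_range: "1 \<le> q \<Longrightarrow> q < n \<Longrightarrow> lam (Suc q) + 1 \<le> lam 1"
  using lam_ge[of 1 "Suc q"] by auto

lemma SL: "short_lengths n lam = {1..n-1}"
proof (intro equalityI subsetI)
  fix q assume "q \<in> short_lengths n lam"
  then obtain j where "1 \<le> j" "j \<le> lam 1" "col_len n lam j = q" "q < n"
    unfolding short_lengths_def by auto
  then show "q \<in> {1..n-1}" using c_pos by force
next
  fix q assume q: "q \<in> {1..n-1}"
  then have "col_len n lam (lam (Suc q) + 1) = q" "lam (Suc q) + 1 \<le> lam 1"
    using c_q jq_range by auto
  then show "q \<in> short_lengths n lam" unfolding short_lengths_def using q by force
qed

lemma boxes_iff: "(j, i) \<in> boxes n lam \<longleftrightarrow> 1 \<le> j \<and> j \<le> lam 1 \<and> 1 \<le> i \<and> i \<le> col_len n lam j"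
  unfolding boxes_def by simp

end



definition Yof :: "nat \<Rightarrow> (nat \<Rightarrow> nat) \<Rightarrow> nat list \<Rightarrow> nat \<Rightarrow> nat \<Rightarrow> nat" where
  "Yof n lam xs j i = (if (j, i) \<in> boxes n lam then sorted_list_of_set (set (take (col_len n lam j) xs)) ! (i - 1) else 0)"

context
  fixes n :: nat and lam :: "nat \<Rightarrow> nat"
  assumes n1: "1 \<le> n" and sp: "strict_partition n lam"
begin

lemma col_strict:
  assumes T: "tableau n lam Y" and j: "1 \<le> j" "j \<le> lam 1"
    and i: "1 \<le> i" "i < i'" "i' \<le> col_len n lam j"
  shows "Y j i < Y j i'"
proof -
  have "Suc i \<le> i'" using i by simp
  then show ?thesis using i(3)
  proof (induction i' rule: dec_induct)
    case base
    then show ?case using T j i(1) unfolding tableau_def boxes_iff[OF n1 sp] by auto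
  next
    case (step m)
    have "Y j m < Y j (Suc m)" using T j i(1) step unfolding tableau_def boxes_iff[OF n1 sp] by auto
    then show ?case using step by simp
  qed
qed

lemma reidx: "{f i | i. 1 \<le> i \<and> i \<le> k} = (\<lambda>i. f (Suc i)) ` {..<k}"
proof (intro equalityI subsetI)
  fix x assume "x \<in> {f i |i. 1 \<le> i \<and> i \<le> k}"
  then obtain i where "x = f i" "1 \<le> i" "i \<le> k" by blast
  then show "x \<in> (\<lambda>i. f (Suc i)) ` {..<k}" by (intro image_eqI[of _ _ "i - 1"]) auto
next
  fix x assume "x \<in> (\<lambda>i. f (Suc i)) ` {..<k}"
  then obtain i where "x = f (Suc i)" "i < k" by blast
  then show "x \<in> {f i |i. 1 \<le> i \<and> i \<le> k}" by (intro CollectI exI[of _ "Suc i"]) auto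
qed

lemma set_nth_image: "set xs = (\<lambda>i. xs ! i) ` {..<length xs}"
  by (auto simp: in_set_conv_nth image_iff)

lemma col_list:
  assumes T: "tableau n lam Y" and j: "1 \<le> j" "j \<le> lam 1"
  shows "sorted_list_of_set (col_set n lam Y j) = map (\<lambda>i. Y j (Suc i)) [0..<col_len n lam j]"
proof -
  let ?L = "map (\<lambda>i. Y j (Suc i)) [0..<col_len n lam j]"
  have "sorted_wrt (<) ?L"
    unfolding sorted_wrt_iff_nth_less
    using col_strict[OF T j] by auto
  then have sd: "sorted ?L" "distinct ?L" by (auto simp: strict_sorted_iff)
  have st: "set ?L = col_set n lam Y j" unfolding col_set_def reidx by (auto simp: atLeast0LessThan)
  have fin: "finite (col_set n lam Y j)" unfolding st[symmetric] by simp
  show ?thesis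
    by (rule sorted_distinct_set_unique) (use sd st fin in auto)
qed

lemma col_card:
  assumes T: "tableau n lam Y" and j: "1 \<le> j" "j \<le> lam 1"
  shows "card (col_set n lam Y j) = col_len n lam j"
proof -
  have "length (sorted_list_of_set (col_set n lam Y j)) = col_len n lam j"
    unfolding col_list[OF T j] by simp
  then show ?thesis by simp
qed

lemma col_finite: "finite (col_set n lam Y j)"
  unfolding col_set_def by simp

lemma col_nth:
  assumes T: "tableau n lam Y" and j: "1 \<le> j" "j \<le> lam 1" and i: "1 \<le> i" "i \<le> col_len n lam j"
  shows "Y j i = sorted_list_of_set (col_set n lam Y j) ! (i - 1)"
proof -
  have "sorted_list_of_set (col_set n lam Y j) ! (i - 1) = Y j (Suc (i - 1))"
    unfolding col_list[OF T j] using i nth_upt[of 0 "i - 1" "col_len n lam j"] by simp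
  then show ?thesis using i by simp
qed

lemma col_sub:
  assumes T: "tableau n lam Y" and j: "1 \<le> j" "j \<le> lam 1"
  shows "col_set n lam Y j \<subseteq> {1..n}"
  using T j unfolding col_set_def tableau_def boxes_iff[OF n1 sp] by fastforce

lemma key_same_len:
  assumes K: "is_key n lam Y" and j: "1 \<le> j" "j \<le> lam 1" and l: "1 \<le> l" "l \<le> lam 1"
    and e: "col_len n lam j = col_len n lam l"
  shows "col_set n lam Y j = col_set n lam Y l"
proof -
  have T: "tableau n lam Y" using K unfolding is_key_def by simp
  have "col_set n lam Y j \<subseteq> col_set n lam Y l \<or> col_set n lam Y l \<subseteq> col_set n lam Y j"
    using K j l unfolding is_key_def by (cases "j \<le> l") auto
  moreover have "card (col_set n lam Y j) = card (col_set n lam Y l)"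
    using col_card[OF T j] col_card[OF T l] e by simp
  ultimately show ?thesis using card_subset_eq col_finite by metis
qed


lemma card_take: "distinct xs \<Longrightarrow> q \<le> length xs \<Longrightarrow> card (set (take q xs)) = q"
  by (simp add: distinct_card)

lemma Yof_colset:
  assumes xs: "distinct xs" "set xs = {1..n}" and j: "1 \<le> j" "j \<le> lam 1"
  shows "col_set n lam (Yof n lam xs) j = set (take (col_len n lam j) xs)"
proof -
  have len: "length xs = n" using xs by (metis card_atLeastAtMost diff_Suc_1 distinct_card)
  let ?A = "set (take (col_len n lam j) xs)"
  have cA: "card ?A = col_len n lam j" using card_take[OF xs(1)] len c_le_n[OF n1 sp] by simp
  have l: "length (sorted_list_of_set ?A) = col_len n lam j" using cA by simp
  have "col_set n lam (Yof n lam xs) j = {sorted_list_of_set ?A ! (i - 1) | i. 1 \<le> i \<and> i \<le> col_len n lam j}"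
    unfolding col_set_def Yof_def boxes_iff[OF n1 sp] using j by auto
  also have "\<dots> = (\<lambda>i. sorted_list_of_set ?A ! i) ` {..<length (sorted_list_of_set ?A)}"
    unfolding reidx l by simp
  also have "\<dots> = set (sorted_list_of_set ?A)" by (rule set_nth_image[symmetric])
  also have "\<dots> = ?A" by simp
  finally show ?thesis .
qed

end



lemma validP_nth: "validP P xs \<longleftrightarrow> (\<forall>k<length xs. cnd (P \<union> set (take k xs)) (xs ! k))"
proof (induction xs arbitrary: P)
  case Nil then show ?case by simp
next
  case (Cons x xs)
  have "(\<forall>k<length (x # xs). cnd (P \<union> set (take k (x # xs))) ((x # xs) ! k)) \<longleftrightarrow>
        cnd P x \<and> (\<forall>k<length xs. cnd (insert x P \<union> set (take k xs)) (xs ! k))"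
    by (auto simp: less_Suc_eq_0_disj)
  then show ?case using Cons.IH by simp
qed

context
  fixes n :: nat and lam :: "nat \<Rightarrow> nat"
  assumes n1: "1 \<le> n" and sp: "strict_partition n lam"
begin

lemma len_perm: "distinct xs \<Longrightarrow> set xs = {1..n} \<Longrightarrow> length xs = n"
  by (metis card_atLeastAtMost diff_Suc_1 distinct_card)

lemma Yof_key:
  assumes xs: "distinct xs" "set xs = {1..n}"
  shows "is_key n lam (Yof n lam xs)"
proof -
  have len: "length xs = n" using len_perm xs by blast
  let ?A = "\<lambda>j. set (take (col_len n lam j) xs)"
  have cA: "\<And>j. card (?A j) = col_len n lam j" using card_take[OF n1 sp xs(1)] len c_le_n[OF n1 sp] by simp
  have Asub: "\<And>j. ?A j \<subseteq> {1..n}" using xs(2) set_take_subset by metis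
  have fA: "\<And>j. finite (?A j)" by simp
  have t1: "\<forall>j i. (j, i) \<in> boxes n lam \<longrightarrow> 1 \<le> Yof n lam xs j i \<and> Yof n lam xs j i \<le> n"
  proof (intro allI impI)
    fix j i assume b: "(j, i) \<in> boxes n lam"
    then have r: "1 \<le> i" "i \<le> col_len n lam j" using boxes_iff[OF n1 sp] by auto
    have "Yof n lam xs j i = sorted_list_of_set (?A j) ! (i - 1)" using b by (simp add: Yof_def)
    also have "\<dots> \<in> set (sorted_list_of_set (?A j))" by (rule nth_mem) (use r cA in simp)
    finally have "Yof n lam xs j i \<in> ?A j" by simp
    then show "1 \<le> Yof n lam xs j i \<and> Yof n lam xs j i \<le> n" using Asub by fastforce
  qed
  have t2: "\<forall>j i. (j, i) \<notin> boxes n lam \<longrightarrow> Yof n lam xs j i = 0" by (simp add: Yof_def)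
  have t3: "\<forall>j i. (j, i) \<in> boxes n lam \<and> (j, Suc i) \<in> boxes n lam \<longrightarrow> Yof n lam xs j i < Yof n lam xs j (Suc i)"
  proof (intro allI impI)
    fix j i assume b: "(j, i) \<in> boxes n lam \<and> (j, Suc i) \<in> boxes n lam"
    then have r: "1 \<le> i" "Suc i \<le> col_len n lam j" using boxes_iff[OF n1 sp] by auto
    have "sorted_wrt (<) (sorted_list_of_set (?A j))" by (rule strict_sorted_list_of_set)
    then have "sorted_list_of_set (?A j) ! (i - 1) < sorted_list_of_set (?A j) ! (Suc i - 1)"
      by (rule sorted_wrt_nth_less) (use r cA in auto)
    then show "Yof n lam xs j i < Yof n lam xs j (Suc i)" using b by (simp add: Yof_def)
  qed
  have t4: "\<forall>j i. (j, i) \<in> boxes n lam \<and> (Suc j, i) \<in> boxes n lam \<longrightarrow> Yof n lam xs j i \<le> Yof n lam xs (Suc j) i"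
  proof (intro allI impI)
    fix j i assume b: "(j, i) \<in> boxes n lam \<and> (Suc j, i) \<in> boxes n lam"
    then have r: "1 \<le> i" "i \<le> col_len n lam (Suc j)" using boxes_iff[OF n1 sp] by auto
    have sub: "?A (Suc j) \<subseteq> ?A j"
      by (rule set_take_subset_set_take) (rule c_anti[OF n1 sp], simp)
    have "sorted_list_of_set (?A j) ! (i - 1) \<le> sorted_list_of_set (?A (Suc j)) ! (i - 1)"
      by (rule nth_sorted_subset[OF fA sub]) (use r cA in auto)
    then show "Yof n lam xs j i \<le> Yof n lam xs (Suc j) i" using b by (simp add: Yof_def)
  qed
  have tab: "tableau n lam (Yof n lam xs)" unfolding tableau_def using t1 t2 t3 t4 by blast
  show ?thesis unfolding is_key_def
  proof (intro conjI tab allI impI)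
    fix l j assume lj: "1 \<le> l \<and> l \<le> j \<and> j \<le> lam 1"
    have "?A j \<subseteq> ?A l" by (rule set_take_subset_set_take) (rule c_anti[OF n1 sp], use lj in simp)
    then show "col_set n lam (Yof n lam xs) j \<subseteq> col_set n lam (Yof n lam xs) l"
      using Yof_colset[OF n1 sp xs] lj by simp
  qed
qed

lemma Yof_inj:
  assumes xs: "distinct xs" "set xs = {1..n}" and ys: "distinct ys" "set ys = {1..n}"
    and e: "Yof n lam xs = Yof n lam ys"
  shows "xs = ys"
proof (rule take_sets_eq[OF xs(1) ys(1)])
  have lx: "length xs = n" and ly: "length ys = n" using len_perm xs ys by blast+
  then show "length xs = length ys" by simp
  fix q show "set (take q xs) = set (take q ys)"
  proof (cases "1 \<le> q \<and> q < n")
    case True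
    define j where "j = lam (Suc q) + 1"
    have cj: "col_len n lam j = q" using c_q[OF n1 sp] True j_def by simp
    have jr: "1 \<le> j" "j \<le> lam 1" using jq_range[OF n1 sp] True j_def by auto
    show ?thesis using Yof_colset[OF n1 sp xs jr] Yof_colset[OF n1 sp ys jr] e cj by simp
  next
    case False
    then have "q = 0 \<or> n \<le> q" by auto
    then show ?thesis using lx ly xs ys by auto
  qed
qed

lemma Yof_surj:
  assumes K: "is_key n lam Y"
  shows "\<exists>xs. distinct xs \<and> set xs = {1..n} \<and> Y = Yof n lam xs"
proof -
  have T: "tableau n lam Y" using K unfolding is_key_def by simp
  define S where "S q = (if q < n then col_set n lam Y (lam (Suc q) + 1) else {1..n})" for q
  have S0: "S 0 = {}" using n1 c_0[OF n1 sp] unfolding S_def col_set_def by simp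
  have Sq: "card (S q) = q \<and> S q \<subseteq> {1..n}" if "1 \<le> q" "q < n" for q
  proof -
    have jr: "1 \<le> lam (Suc q) + 1" "lam (Suc q) + 1 \<le> lam 1" using jq_range[OF n1 sp] that by auto
    show ?thesis using col_card[OF n1 sp T jr] col_sub[OF n1 sp T jr] c_q[OF n1 sp that] that
      unfolding S_def by simp
  qed
  have chain: "S q \<subseteq> S (Suc q)" if "q < n" for q
  proof (cases "q = 0")
    case True then show ?thesis using S0 by simp
  next
    case False
    show ?thesis
    proof (cases "Suc q < n")
      case True
      have "lam (Suc (Suc q)) + 1 \<le> lam (Suc q) + 1"
        using lam_ge[OF n1 sp, of "Suc q" "Suc (Suc q)"] True by simp
      moreover have "lam (Suc q) + 1 \<le> lam 1" using jq_range[OF n1 sp, of q] False that by auto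
      ultimately show ?thesis using K True that unfolding S_def is_key_def by auto
    next
      case False
      then show ?thesis using Sq[of q] \<open>q \<noteq> 0\<close> that unfolding S_def[of "Suc q"] by auto
    qed
  qed
  have fc: "finite (S q) \<and> card (S q) = q" if "q \<le> n" for q
  proof -
    show ?thesis
    proof (cases "q = 0")
      case True then show ?thesis using S0 by simp
    next
      case False
      show ?thesis
      proof (cases "q = n")
        case True then show ?thesis unfolding S_def by simp
      next
        case False
        then have "1 \<le> q" "q < n" using \<open>q \<noteq> 0\<close> that by auto
        then show ?thesis using Sq[of q] finite_subset[of "S q" "{1..n}"] by auto
      qed
    qed
  qed
  obtain xs where xs: "length xs = n" "distinct xs" "\<forall>q\<le>n. set (take q xs) = S q"
    using chain_list[of n S] chain fc by blast
  have sx: "set xs = {1..n}" using xs(3)[rule_format, of n] xs(1) unfolding S_def by simp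
  have "Y = Yof n lam xs"
  proof (intro ext)
    fix j i
    show "Y j i = Yof n lam xs j i"
    proof (cases "(j, i) \<in> boxes n lam")
      case False
      then show ?thesis using T unfolding tableau_def Yof_def by simp
    next
      case True
      then have r: "1 \<le> j" "j \<le> lam 1" "1 \<le> i" "i \<le> col_len n lam j" using boxes_iff[OF n1 sp] by auto
      have cs: "col_set n lam Y j = set (take (col_len n lam j) xs)"
      proof (cases "col_len n lam j = n")
        case True
        have "col_set n lam Y j = {1..n}"
          using card_subset_eq[OF _ col_sub[OF n1 sp T r(1,2)]] col_card[OF n1 sp T r(1,2)] True by simp
        then show ?thesis using True sx xs(1) by simp
      next
        case False
        define q where "q = col_len n lam j"
        have q: "1 \<le> q" "q < n" using c_pos[OF n1 sp r(1,2)] c_le_n[OF n1 sp, of j] False q_def by auto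
        have jr: "1 \<le> lam (Suc q) + 1" "lam (Suc q) + 1 \<le> lam 1" using jq_range[OF n1 sp] q by auto
        have "col_set n lam Y j = col_set n lam Y (lam (Suc q) + 1)"
          by (rule key_same_len[OF n1 sp K r(1,2) jr]) (use c_q[OF n1 sp q] q_def in simp)
        also have "\<dots> = S q" using q unfolding S_def by simp
        also have "\<dots> = set (take q xs)" using xs(3) q by simp
        finally show ?thesis using q_def by simp
      qed
      have "Y j i = sorted_list_of_set (col_set n lam Y j) ! (i - 1)" by (rule col_nth[OF n1 sp T r])
      then show ?thesis using True cs by (simp add: Yof_def)
    qed
  qed
  then show ?thesis using xs(2) sx by blast
qed

end



context
  fixes n :: nat and lam :: "nat \<Rightarrow> nat"
  assumes n1: "1 \<le> n" and sp: "strict_partition n lam"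
begin

lemma cols_Yof:
  assumes xs: "distinct xs" "set xs = {1..n}" and j: "j \<in> cols_of_len n lam q"
  shows "col_set n lam (Yof n lam xs) j = set (take q xs)"
  using Yof_colset[OF n1 sp xs] j unfolding cols_of_len_def by auto

lemma cols_ne: "1 \<le> q \<Longrightarrow> q < n \<Longrightarrow> lam (Suc q) + 1 \<in> cols_of_len n lam q"
  unfolding cols_of_len_def using c_q[OF n1 sp] jq_range[OF n1 sp] by auto

lemma vals_Yof:
  assumes xs: "distinct xs" "set xs = {1..n}" and q: "1 \<le> q" "q < n"
  shows "vals_of_len n lam (Yof n lam xs) q = set (take q xs)"
  unfolding vals_of_len_def using cols_Yof[OF xs] cols_ne[OF q] by auto

lemma step_take:
  assumes xs: "distinct xs" "set xs = {1..n}" and q: "q < n"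
  shows "set (take (Suc q) xs) = insert (xs ! q) (set (take q xs))" "xs ! q \<notin> set (take q xs)"
proof -
  have len: "length xs = n" using len_perm[OF n1 sp xs] .
  show "set (take (Suc q) xs) = insert (xs ! q) (set (take q xs))"
    using q len by (simp add: take_Suc_conv_app_nth)
  show "xs ! q \<notin> set (take q xs)"
    using distinct_take[OF xs(1), of "Suc q"] q len by (simp add: take_Suc_conv_app_nth)
qed

lemma gapless_iff:
  assumes xs: "distinct xs" "set xs = {1..n}"
  shows "gapless n lam (Yof n lam xs) \<longleftrightarrow>
     (\<forall>k. 1 \<le> k \<and> Suc k < n \<longrightarrow> cnd (set (take k xs)) (xs ! k))"
proof -
  have key: "(let b = Min (vals_of_len n lam (Yof n lam xs) (Suc k) - vals_of_len n lam (Yof n lam xs) k);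
             m = Max (vals_of_len n lam (Yof n lam xs) k)
         in b \<le> m \<longrightarrow> (\<forall>j \<in> cols_of_len n lam (Suc k). {b..m} \<subseteq> col_set n lam (Yof n lam xs) j))
       \<longleftrightarrow> cnd (set (take k xs)) (xs ! k)" if k: "1 \<le> k" "Suc k < n" for k
  proof -
    have v1: "vals_of_len n lam (Yof n lam xs) k = set (take k xs)" using vals_Yof[OF xs] k by simp
    have v2: "vals_of_len n lam (Yof n lam xs) (Suc k) = insert (xs ! k) (set (take k xs))"
      using vals_Yof[OF xs, of "Suc k"] step_take[OF xs, of k] k by simp
    have nin: "xs ! k \<notin> set (take k xs)" using step_take[OF xs, of k] k by simp
    have mn: "Min (insert (xs ! k) (set (take k xs)) - set (take k xs)) = xs ! k"
    proof -
      have "insert (xs ! k) (set (take k xs)) - set (take k xs) = {xs ! k}" using nin by blast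
      then show ?thesis by simp
    qed
    have ne: "set (take k xs) \<noteq> {}" using k len_perm[OF n1 sp xs] by auto
    have cs: "\<forall>j \<in> cols_of_len n lam (Suc k). col_set n lam (Yof n lam xs) j = insert (xs ! k) (set (take k xs))"
      using cols_Yof[OF xs] step_take[OF xs, of k] k by simp
    have cn: "cols_of_len n lam (Suc k) \<noteq> {}" using cols_ne[of "Suc k"] k by auto
    show ?thesis unfolding v1 v2 mn Let_def cnd_def using ne cs cn by auto
  qed
  show ?thesis
  proof
    assume g: "gapless n lam (Yof n lam xs)"
    show "\<forall>k. 1 \<le> k \<and> Suc k < n \<longrightarrow> cnd (set (take k xs)) (xs ! k)"
    proof (intro allI impI)
      fix k assume k: "1 \<le> k \<and> Suc k < n"
      have "k \<in> short_lengths n lam" "Suc k \<in> short_lengths n lam" using SL[OF n1 sp] k by auto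
      moreover have "\<not> (\<exists>x \<in> short_lengths n lam. k < x \<and> x < Suc k)" by auto
      ultimately show "cnd (set (take k xs)) (xs ! k)"
        using g key[of k] k unfolding gapless_def by blast
    qed
  next
    assume c: "\<forall>k. 1 \<le> k \<and> Suc k < n \<longrightarrow> cnd (set (take k xs)) (xs ! k)"
    show "gapless n lam (Yof n lam xs)" unfolding gapless_def
    proof (intro ballI impI)
      fix q q' assume q: "q \<in> short_lengths n lam" "q' \<in> short_lengths n lam"
        and h: "q < q' \<and> \<not> (\<exists>x \<in> short_lengths n lam. q < x \<and> x < q')"
      have qr: "1 \<le> q" "q' < n" using q SL[OF n1 sp] by auto
      have "q' = Suc q"
      proof (rule ccontr)
        assume "q' \<noteq> Suc q"
        then have "Suc q \<in> short_lengths n lam" "q < Suc q" "Suc q < q'" using h qr SL[OF n1 sp] by auto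
        then show False using h by blast
      qed
      then show "let b = Min (vals_of_len n lam (Yof n lam xs) q' - vals_of_len n lam (Yof n lam xs) q);
             m = Max (vals_of_len n lam (Yof n lam xs) q)
         in b \<le> m \<longrightarrow> (\<forall>j \<in> cols_of_len n lam q'. {b..m} \<subseteq> col_set n lam (Yof n lam xs) j)"
        using key[of q] c qr by simp
    qed
  qed
qed

lemma valid_iff:
  assumes xs: "distinct xs" "set xs = {1..n}"
  shows "validP {} xs \<longleftrightarrow> (\<forall>k. 1 \<le> k \<and> Suc k < n \<longrightarrow> cnd (set (take k xs)) (xs ! k))"
proof -
  have len: "length xs = n" using len_perm[OF n1 sp xs] .
  have last: "cnd (set (take k xs)) (xs ! k)" if k: "Suc k = n" for k
  proof -
    have e: "insert (xs ! k) (set (take k xs)) = {1..n}"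
      using step_take[OF xs, of k] k len xs(2) by (metis lessI order_refl take_all)
    have x1: "1 \<le> xs ! k" using e by auto
    have "set (take k xs) \<subseteq> {1..n}" using e by auto
    then have "set (take k xs) \<noteq> {} \<longrightarrow> Max (set (take k xs)) \<le> n" by auto
    then show ?thesis unfolding cnd_def e using x1 by auto
  qed
  have "validP {} xs \<longleftrightarrow> (\<forall>k<n. cnd (set (take k xs)) (xs ! k))"
    unfolding validP_nth len by simp
  also have "\<dots> \<longleftrightarrow> (\<forall>k. 1 \<le> k \<and> Suc k < n \<longrightarrow> cnd (set (take k xs)) (xs ! k))"
  proof
    assume "\<forall>k<n. cnd (set (take k xs)) (xs ! k)"
    then show "\<forall>k. 1 \<le> k \<and> Suc k < n \<longrightarrow> cnd (set (take k xs)) (xs ! k)" by auto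
  next
    assume a: "\<forall>k. 1 \<le> k \<and> Suc k < n \<longrightarrow> cnd (set (take k xs)) (xs ! k)"
    show "\<forall>k<n. cnd (set (take k xs)) (xs ! k)"
    proof (intro allI impI)
      fix k assume k: "k < n"
      show "cnd (set (take k xs)) (xs ! k)"
      proof (cases "k = 0")
        case True then show ?thesis by (simp add: cnd_def)
      next
        case False
        then show ?thesis using a last k by (cases "Suc k = n") auto
      qed
    qed
  qed
  finally show ?thesis .
qed

lemma main_count: "card {Y. is_key n lam Y \<and> gapless n lam Y} = F n 0"
proof -
  have "bij_betw (Yof n lam) (LL n {}) {Y. is_key n lam Y \<and> gapless n lam Y}"
    unfolding bij_betw_def
  proof
    show "inj_on (Yof n lam) (LL n {})"
      unfolding inj_on_def LL_def using Yof_inj[OF n1 sp] by auto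
    show "Yof n lam ` LL n {} = {Y. is_key n lam Y \<and> gapless n lam Y}"
    proof (intro equalityI subsetI)
      fix Y assume "Y \<in> Yof n lam ` LL n {}"
      then obtain xs where xs: "distinct xs" "set xs = {1..n}" "validP {} xs" "Y = Yof n lam xs"
        unfolding LL_def by auto
      then show "Y \<in> {Y. is_key n lam Y \<and> gapless n lam Y}"
        using Yof_key[OF n1 sp xs(1,2)] gapless_iff[OF xs(1,2)] valid_iff[OF xs(1,2)] by simp
    next
      fix Y assume "Y \<in> {Y. is_key n lam Y \<and> gapless n lam Y}"
      then have K: "is_key n lam Y" and g: "gapless n lam Y" by auto
      obtain xs where xs: "distinct xs" "set xs = {1..n}" "Y = Yof n lam xs" using Yof_surj[OF n1 sp K] by blast
      have "validP {} xs" using g xs gapless_iff[OF xs(1,2)] valid_iff[OF xs(1,2)] by simp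
      then have "xs \<in> LL n {}" using xs unfolding LL_def by simp
      then show "Y \<in> Yof n lam ` LL n {}" using xs(3) by blast
    qed
  qed
  then have "card {Y. is_key n lam Y \<and> gapless n lam Y} = card (LL n {})"
    by (simp add: bij_betw_same_card)
  also have "\<dots> = F n 0" using LL_empty n1 by simp
  finally show ?thesis .
qed

end

theorem corollary5p3:
  fixes n :: nat and lam :: "nat \<Rightarrow> nat"
  assumes "1 \<le> n" and "strict_partition n lam"
  shows "real (card {Y. is_key n lam Y \<and> gapless n lam Y})
           = real ((2 * n) choose n) / real (n + 1)"
  using main_count[OF assms] F_catalan[OF assms(1)] by simp



end
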